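(* For $\alpha,\beta\in\mathbb{C}$ with $|\alpha|\ne|\beta|$ and $r_1,r_2\in\mathbb{R}$, let $X_{\alpha,\beta}=\Re\int\Phi:\mathbb{C}-\{0\}\to\mathbb{R}^3$ with $\Phi_1=\big(\frac1{z^2}+\frac{r_1}{z}+\frac{\alpha+\overline\beta}{2}\big)dz$, $\Phi_2=\big(\frac{\imath}{z^2}+\frac{r_2}{z}+\frac{\alpha-\overline\beta}{2\imath}\big)dz$, $\Phi_3=\frac{dz}{z}$. Then $X_{\alpha,\beta}$ is a well-defined harmonic map, and it is an immersion if and only if $(\alpha,\beta)\in\Omega:=\mathbb{C}^2-\big(\{(u,v):|u|\le|v|\}\cup\{(u,v):\Re(u)\ge0,\ |\Im(u)|\le|v|\}\big)$. *)

theory Defs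
  imports "HOL-Analysis.Analysis"
begin

definition Phi :: "complex \<Rightarrow> complex \<Rightarrow> real \<Rightarrow> real \<Rightarrow> complex \<Rightarrow> complex ^ 3" where
  "Phi \<alpha> \<beta> r1 r2 z = vector
     [1 / z^2 + of_real r1 / z + (\<alpha> + cnj \<beta>) / 2,
      \<i> / z^2 + of_real r2 / z + (\<alpha> - cnj \<beta>) / (2 * \<i>),
      1 / z]"

text \<open>X is a real primitive of Re Phi on S: dX_z(h) = Re (Phi_k(z) h) componentwise,
  i.e. X = Re (integral of Phi) (up to an additive constant).\<close>
definition is_Re_primitive :: "(complex \<Rightarrow> real ^ 3) \<Rightarrow> (complex \<Rightarrow> complex ^ 3) \<Rightarrow> complex set \<Rightarrow> bool" where
  "is_Re_primitive X \<Phi> S \<longleftrightarrow>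
     (\<forall>z\<in>S. (X has_derivative (\<lambda>h. \<chi> k. Re (\<Phi> z $ k * h))) (at z))"

definition harmonic_on :: "(complex \<Rightarrow> 'a::euclidean_space) \<Rightarrow> complex set \<Rightarrow> bool" where
  "harmonic_on f S \<longleftrightarrow> open S \<and>
    (\<exists>fx fy fxx fxy fyx fyy.
       (\<forall>z\<in>S. (f has_derivative (\<lambda>h. Re h *\<^sub>R fx z + Im h *\<^sub>R fy z)) (at z)) \<and>
       (\<forall>z\<in>S. (fx has_derivative (\<lambda>h. Re h *\<^sub>R fxx z + Im h *\<^sub>R fxy z)) (at z)) \<and>
       (\<forall>z\<in>S. (fy has_derivative (\<lambda>h. Re h *\<^sub>R fyx z + Im h *\<^sub>R fyy z)) (at z)) \<and>
       continuous_on S fxx \<and> continuous_on S fxy \<and> continuous_on S fyx \<and> continuous_on S fyy \<and>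
       (\<forall>z\<in>S. fxx z + fyy z = 0))"

definition immersion_on :: "(complex \<Rightarrow> 'a::real_normed_vector) \<Rightarrow> complex set \<Rightarrow> bool" where
  "immersion_on f S \<longleftrightarrow> (\<forall>z\<in>S. f differentiable (at z) \<and> inj (frechet_derivative f (at z)))"

definition Omega :: "(complex \<times> complex) set" where
  "Omega = UNIV - ({(u, v). cmod u \<le> cmod v} \<union> {(u, v). Re u \<ge> 0 \<and> \<bar>Im u\<bar> \<le> cmod v})"

end

theory Submission
  imports Defs
begin

lemma vec_has_derivative:
  fixes f :: "'a::real_normed_vector \<Rightarrow> real^'n"
  assumes "\<And>k. ((\<lambda>z. f z $ k) has_derivative (\<lambda>h. f' h $ k)) (at a within S)"
  shows "(f has_derivative f') (at a within S)"
proof (rule has_derivative_componentwise_within[THEN iffD2], rule ballI)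
  fix i :: "real^'n" assume "i \<in> Basis"
  then obtain k where i: "i = axis k 1" by (auto simp: Basis_vec_def)
  show "((\<lambda>x. f x \<bullet> i) has_derivative (\<lambda>x. f' x \<bullet> i)) (at a within S)"
    using assms[of k] by (simp add: i inner_axis)
qed

lemma vec_nth_has_derivative:
  fixes f :: "'a::real_normed_vector \<Rightarrow> real^'n"
  assumes "(f has_derivative f') F"
  shows "((\<lambda>z. f z $ k) has_derivative (\<lambda>h. f' h $ k)) F"
  using bounded_linear.has_derivative[OF bounded_linear_vec_nth assms] .

lemma Re_hfd:
  assumes "(g has_field_derivative g') (at z)"
  shows "((\<lambda>z. Re (g z)) has_derivative (\<lambda>h. Re (g' * h))) (at z)"
proof -
  have "(g has_derivative (\<lambda>h. g' * h)) (at z)" using assms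
    by (simp add: has_field_derivative_def)
  from bounded_linear.has_derivative[OF bounded_linear_Re this] show ?thesis .
qed

lemma ln_cmod_der:
  fixes z :: complex assumes "z \<noteq> 0"
  shows "((\<lambda>z. ln (cmod z)) has_derivative (\<lambda>h. Re (h / z))) (at z)"
proof -
  have "((\<lambda>z. ln (cmod z)) has_derivative (\<lambda>h. (h \<bullet> sgn z) * inverse (cmod z))) (at z)"
    using has_derivative_ln[OF _ has_derivative_norm[OF assms]] assms by simp
  moreover have "(\<lambda>h. (h \<bullet> sgn z) * inverse (cmod z)) = (\<lambda>h. Re (h / z))"
  proof
    fix h
    have "Re (h / z) = Re (h * cnj z) / (cmod z)^2"
      by (simp add: complex_div_cnj[of h z])
    then show "(h \<bullet> sgn z) * inverse (cmod z) = Re (h / z)"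
      using assms by (simp add: inner_complex_def sgn_div_norm power2_eq_square field_simps)
  qed
  ultimately show ?thesis by simp
qed


lemma Re_mult_real_gen: "Re (complex_of_real r * w) = r * Re w" by simp

lemma exists_prim:
  "is_Re_primitive (\<lambda>z. vector [Re (-1/z + ((\<alpha> + cnj \<beta>)/2) * z) + r1 * ln (cmod z),
                                 Re (-\<i>/z + ((\<alpha> - cnj \<beta>)/(2*\<i>)) * z) + r2 * ln (cmod z),
                                 ln (cmod z)] :: real^3) (Phi \<alpha> \<beta> r1 r2) (- {0})"
  unfolding is_Re_primitive_def
proof (intro ballI vec_has_derivative)
  fix z :: complex and k :: 3
  assume "z \<in> - {0}" then have z: "z \<noteq> 0" by simp
  define c1 where "c1 = (\<alpha> + cnj \<beta>)/2"
  define c2 where "c2 = (\<alpha> - cnj \<beta>)/(2*\<i>)"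
  have d1: "((\<lambda>z. -1/z + c1 * z) has_field_derivative (1/z^2 + c1)) (at z)"
    using z by (auto intro!: derivative_eq_intros simp: power2_eq_square field_simps)
  have d2: "((\<lambda>z. -\<i>/z + c2 * z) has_field_derivative (\<i>/z^2 + c2)) (at z)"
    using z by (auto intro!: derivative_eq_intros simp: power2_eq_square field_simps)
  have L: "((\<lambda>z. r * ln (cmod z)) has_derivative (\<lambda>h. r * Re (h / z))) (at z)" for r
    using has_derivative_mult_right[OF ln_cmod_der[OF z]] .
  have eq: "Re ((A + of_real r / z) * h) = Re (A * h) + r * Re (h / z)" for A r h
  proof -
    have "(A + of_real r / z) * h = A * h + of_real r * (h / z)" by (simp add: algebra_simps)
    moreover have "Re (of_real r * (h / z)) = r * Re (h / z)" 
      using Re_mult_real_gen .  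
    ultimately show ?thesis by (simp only: plus_complex.sel)
  qed
  have P1: "Phi \<alpha> \<beta> r1 r2 z $ 1 = (1/z^2 + c1) + of_real r1 / z" by (simp add: Phi_def c1_def)
  have P2: "Phi \<alpha> \<beta> r1 r2 z $ 2 = (\<i>/z^2 + c2) + of_real r2 / z" by (simp add: Phi_def c2_def)
  have P3: "Phi \<alpha> \<beta> r1 r2 z $ 3 = 1 / z" by (simp add: Phi_def)
  have "k = 1 \<or> k = 2 \<or> k = 3" using exhaust_3 by blast
  then show "((\<lambda>z. vector [Re (-1/z + ((\<alpha> + cnj \<beta>)/2) * z) + r1 * ln (cmod z),
                                 Re (-\<i>/z + ((\<alpha> - cnj \<beta>)/(2*\<i>)) * z) + r2 * ln (cmod z),
                                 ln (cmod z)] $ k :: real) has_derivative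
         (\<lambda>h. (\<chi> k. Re (Phi \<alpha> \<beta> r1 r2 z $ k * h)) $ k)) (at z)"
  proof (elim disjE)
    assume "k = 1"
    show ?thesis unfolding \<open>k = 1\<close> c1_def[symmetric]
      apply (simp only: vector_3 vec_lambda_beta)
      apply (rule has_derivative_eq_rhs[OF has_derivative_add[OF Re_hfd[OF d1] L]])
      by (simp only: P1 eq)
  next
    assume "k = 2"
    show ?thesis unfolding \<open>k = 2\<close> c2_def[symmetric]
      apply (simp only: vector_3 vec_lambda_beta)
      apply (rule has_derivative_eq_rhs[OF has_derivative_add[OF Re_hfd[OF d2] L]])
      by (simp only: P2 eq)
  next
    assume "k = 3"
    show ?thesis unfolding \<open>k = 3\<close>
      apply (simp only: vector_3 vec_lambda_beta)
      apply (rule has_derivative_eq_rhs[OF ln_cmod_der[OF z]])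
      by (simp add: P3)
  qed
qed


lemma Re_lin: "Re (a * h) = Re h * Re a + Im h * Re (a * \<i>)" by simp

lemma harmonic_gen:
  fixes X :: "complex \<Rightarrow> real^3" and g g' :: "complex \<Rightarrow> complex^3"
  assumes S: "open S" and P: "is_Re_primitive X g S"
    and D: "\<And>k z. z \<in> S \<Longrightarrow> ((\<lambda>z. g z $ k) has_field_derivative g' z $ k) (at z)"
    and C: "\<And>k. continuous_on S (\<lambda>z. g' z $ k)"
  shows "harmonic_on X S"
  unfolding harmonic_on_def
proof (intro conjI exI)
  show "open S" by fact
  show "\<forall>z\<in>S. (X has_derivative (\<lambda>h. Re h *\<^sub>R (\<chi> k. Re (g z $ k)) + Im h *\<^sub>R (\<chi> k. Re (g z $ k * \<i>)))) (at z)"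
  proof
    fix z assume "z \<in> S"
    with P have d: "(X has_derivative (\<lambda>h. \<chi> k. Re (g z $ k * h))) (at z)"
      unfolding is_Re_primitive_def by blast
    have e: "(\<lambda>h. \<chi> k. Re (g z $ k * h)) = (\<lambda>h. Re h *\<^sub>R (\<chi> k. Re (g z $ k)) + Im h *\<^sub>R (\<chi> k. Re (g z $ k * \<i>)))"
      by (rule ext) (simp only: vec_eq_iff vec_lambda_beta vector_add_component vector_scaleR_component real_scaleR_def Re_lin[symmetric] simp_thms)
    show "(X has_derivative (\<lambda>h. Re h *\<^sub>R (\<chi> k. Re (g z $ k)) + Im h *\<^sub>R (\<chi> k. Re (g z $ k * \<i>)))) (at z)"
      using d unfolding e .
  qed
  show "\<forall>z\<in>S. ((\<lambda>z. \<chi> k. Re (g z $ k)) has_derivative (\<lambda>h. Re h *\<^sub>R (\<chi> k. Re (g' z $ k)) + Im h *\<^sub>R (\<chi> k. Re (g' z $ k * \<i>)))) (at z)"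
  proof
    fix z assume z: "z \<in> S"
    show "((\<lambda>z. \<chi> k. Re (g z $ k)) has_derivative (\<lambda>h. Re h *\<^sub>R (\<chi> k. Re (g' z $ k)) + Im h *\<^sub>R (\<chi> k. Re (g' z $ k * \<i>)))) (at z)"
    proof (rule vec_has_derivative)
      fix k
      show "((\<lambda>z. (\<chi> k. Re (g z $ k)) $ k) has_derivative (\<lambda>h. (Re h *\<^sub>R (\<chi> k. Re (g' z $ k)) + Im h *\<^sub>R (\<chi> k. Re (g' z $ k * \<i>))) $ k)) (at z)"
        using Re_hfd[OF D[OF z, of k]] by (simp only: vec_lambda_beta Re_lin[symmetric] vector_add_component vector_scaleR_component real_scaleR_def)
    qed
  qed
  show "\<forall>z\<in>S. ((\<lambda>z. \<chi> k. Re (g z $ k * \<i>)) has_derivative (\<lambda>h. Re h *\<^sub>R (\<chi> k. Re (g' z $ k * \<i>)) + Im h *\<^sub>R (\<chi> k. Re (g' z $ k * \<i> * \<i>)))) (at z)"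
  proof
    fix z assume z: "z \<in> S"
    show "((\<lambda>z. \<chi> k. Re (g z $ k * \<i>)) has_derivative (\<lambda>h. Re h *\<^sub>R (\<chi> k. Re (g' z $ k * \<i>)) + Im h *\<^sub>R (\<chi> k. Re (g' z $ k * \<i> * \<i>)))) (at z)"
    proof (rule vec_has_derivative)
      fix k
      have "((\<lambda>z. g z $ k * \<i>) has_field_derivative g' z $ k * \<i>) (at z)"
        using DERIV_cmult_right[OF D[OF z, of k]] .
      from Re_hfd[OF this]
      show "((\<lambda>z. (\<chi> k. Re (g z $ k * \<i>)) $ k) has_derivative (\<lambda>h. (Re h *\<^sub>R (\<chi> k. Re (g' z $ k * \<i>)) + Im h *\<^sub>R (\<chi> k. Re (g' z $ k * \<i> * \<i>))) $ k)) (at z)"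
        by (simp only: vec_lambda_beta Re_lin[symmetric] vector_add_component vector_scaleR_component real_scaleR_def)
    qed
  qed
  have Ck: "continuous_on S (\<lambda>z. Re (g' z $ k * c))" for k c
    by (rule continuous_on_Re[OF continuous_on_mult[OF C continuous_on_const]])
  have Ck0: "continuous_on S (\<lambda>z. Re (g' z $ k))" for k
    using Ck[of k 1] by simp
  have Ck2: "continuous_on S (\<lambda>z. Re (g' z $ k * \<i> * \<i>))" for k
    using Ck[of k "\<i> * \<i>"] by (simp only: mult.assoc)
  show "continuous_on S (\<lambda>z. \<chi> k. Re (g' z $ k))"
    by (rule continuous_on_vec_lambda) (rule Ck0)
  show "continuous_on S (\<lambda>z. \<chi> k. Re (g' z $ k * \<i>))"
    by (rule continuous_on_vec_lambda) (rule Ck)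
  show "continuous_on S (\<lambda>z. \<chi> k. Re (g' z $ k * \<i>))"
    by (rule continuous_on_vec_lambda) (rule Ck)
  show "continuous_on S (\<lambda>z. \<chi> k. Re (g' z $ k * \<i> * \<i>))"
    by (rule continuous_on_vec_lambda) (rule Ck2)
  show "\<forall>z\<in>S. (\<chi> k. Re (g' z $ k)) + (\<chi> k. Re (g' z $ k * \<i> * \<i>)) = 0"
    by (simp add: vec_eq_iff)
qed


lemma inj_char:
  fixes z :: complex assumes z: "z \<noteq> 0"
  shows "inj (\<lambda>h. (\<chi> k. Re (Phi \<alpha> \<beta> r1 r2 z $ k * h)) :: real^3) \<longleftrightarrow>
    \<not> (Im (1/z + ((\<alpha> + cnj \<beta>)/2) * z) = 0 \<and> Im (\<i>/z + ((\<alpha> - cnj \<beta>)/(2*\<i>)) * z) = 0)"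
proof -
  define L where "L = (\<lambda>h. (\<chi> k. Re (Phi \<alpha> \<beta> r1 r2 z $ k * h)) :: real^3)"
  have e1: "Phi \<alpha> \<beta> r1 r2 z $ 1 * z = (1/z + ((\<alpha> + cnj \<beta>)/2) * z) + of_real r1"
    using z by (simp add: Phi_def field_simps power2_eq_square)
  have e2: "Phi \<alpha> \<beta> r1 r2 z $ 2 * z = (\<i>/z + ((\<alpha> - cnj \<beta>)/(2*\<i>)) * z) + of_real r2"
    using z by (simp add: Phi_def field_simps power2_eq_square)
  have e3: "Phi \<alpha> \<beta> r1 r2 z $ 3 * z = 1"
    using z by (simp add: Phi_def)
  have key: "Re (Phi \<alpha> \<beta> r1 r2 z $ k * (w * z)) = Re (Phi \<alpha> \<beta> r1 r2 z $ k * z) * Re w - Im (Phi \<alpha> \<beta> r1 r2 z $ k * z) * Im w" for k w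
  proof -
    have "Phi \<alpha> \<beta> r1 r2 z $ k * (w * z) = (Phi \<alpha> \<beta> r1 r2 z $ k * z) * w" by (simp add: algebra_simps)
    then show ?thesis by (simp add: algebra_simps)
  qed
  have "inj L \<longleftrightarrow> \<not> (Im (1/z + ((\<alpha> + cnj \<beta>)/2) * z) = 0 \<and> Im (\<i>/z + ((\<alpha> - cnj \<beta>)/(2*\<i>)) * z) = 0)"
  proof
    assume I: "inj L"
    show "\<not> (Im (1/z + ((\<alpha> + cnj \<beta>)/2) * z) = 0 \<and> Im (\<i>/z + ((\<alpha> - cnj \<beta>)/(2*\<i>)) * z) = 0)"
    proof
      assume H: "Im (1/z + ((\<alpha> + cnj \<beta>)/2) * z) = 0 \<and> Im (\<i>/z + ((\<alpha> - cnj \<beta>)/(2*\<i>)) * z) = 0"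
      have "L (\<i> * z) = L 0"
        unfolding L_def vec_eq_iff
      proof
        fix k :: 3
        have "k = 1 \<or> k = 2 \<or> k = 3" using exhaust_3 by blast
        then have "Im (Phi \<alpha> \<beta> r1 r2 z $ k * z) = 0" using H by (auto simp only: e1 e2 e3) simp_all
        then have "Re (Phi \<alpha> \<beta> r1 r2 z $ k * (\<i> * z)) = 0" using key[of k \<i>] by simp
        then show "(\<chi> k. Re (Phi \<alpha> \<beta> r1 r2 z $ k * (\<i> * z))) $ k = (\<chi> k. Re (Phi \<alpha> \<beta> r1 r2 z $ k * 0)) $ k"
          by simp
      qed
      with I have "\<i> * z = 0" by (rule injD)
      with z show False by simp
    qed
  next
    assume N: "\<not> (Im (1/z + ((\<alpha> + cnj \<beta>)/2) * z) = 0 \<and> Im (\<i>/z + ((\<alpha> - cnj \<beta>)/(2*\<i>)) * z) = 0)"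
    show "inj L"
    proof (rule injI)
      fix h1 h2 assume E: "L h1 = L h2"
      define w where "w = (h1 - h2) / z"
      have hw: "h1 - h2 = w * z" using z by (simp add: w_def)
      have Z: "Re (Phi \<alpha> \<beta> r1 r2 z $ k * (w * z)) = 0" for k
      proof -
        have "Re (Phi \<alpha> \<beta> r1 r2 z $ k * h1) = Re (Phi \<alpha> \<beta> r1 r2 z $ k * h2)"
          using E unfolding L_def vec_eq_iff by simp
        then show ?thesis unfolding hw[symmetric] by (simp add: right_diff_distrib)
      qed
      have "Re w = 0" using Z[of 3] key[of 3 w] e3 by simp
      show "h1 = h2"
      proof (rule ccontr)
        assume "h1 \<noteq> h2"
        then have "w \<noteq> 0" using z hw by auto
        with \<open>Re w = 0\<close> have "Im w \<noteq> 0" by (simp add: complex_eq_iff)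
        have "Im (1/z + ((\<alpha> + cnj \<beta>)/2) * z) = 0"
          using Z[of 1] key[of 1 w] \<open>Re w = 0\<close> \<open>Im w \<noteq> 0\<close> by (simp add: e1)
        moreover have "Im (\<i>/z + ((\<alpha> - cnj \<beta>)/(2*\<i>)) * z) = 0"
          using Z[of 2] key[of 2 w] \<open>Re w = 0\<close> \<open>Im w \<noteq> 0\<close> by (simp only: e2) simp
        ultimately show False using N by blast
      qed
    qed
  qed
  then show ?thesis by (simp add: L_def)
qed


lemma alg1:
  fixes z \<alpha> \<beta> :: complex assumes z: "z \<noteq> 0"
  shows "(Im (1/z + ((\<alpha> + cnj \<beta>)/2) * z) = 0 \<and> Im (\<i>/z + ((\<alpha> - cnj \<beta>)/(2*\<i>)) * z) = 0) \<longleftrightarrow>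
         cnj \<alpha> * of_real ((cmod z)^2) = 2 + cnj \<beta> * z^2"
proof -
  define f where "f = 1/z + ((\<alpha> + cnj \<beta>)/2) * z"
  define g where "g = \<i>/z + ((\<alpha> - cnj \<beta>)/(2*\<i>)) * z"
  have A: "\<alpha> * z = f + \<i> * g" using z by (simp add: f_def g_def field_simps)
  have B: "2/z + cnj \<beta> * z = f - \<i> * g" using z by (simp add: f_def g_def field_simps)
  have zz: "cnj z * z = of_real ((cmod z)^2)" by (simp add: complex_mult_cnj cmod_power2 mult.commute)
  have eqv: "cnj \<alpha> * of_real ((cmod z)^2) = 2 + cnj \<beta> * z^2 \<longleftrightarrow> cnj (\<alpha> * z) = 2/z + cnj \<beta> * z"
  proof -
    have r1: "cnj (\<alpha> * z) * z = cnj \<alpha> * of_real ((cmod z)^2)"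
      by (simp only: complex_cnj_mult mult.assoc zz)
    have r2: "(2/z + cnj \<beta> * z) * z = 2 + cnj \<beta> * z^2"
      using z by (simp add: field_simps power2_eq_square)
    have "cnj (\<alpha> * z) = 2/z + cnj \<beta> * z \<longleftrightarrow> cnj (\<alpha> * z) * z = (2/z + cnj \<beta> * z) * z"
      using z by auto
    also have "\<dots> \<longleftrightarrow> cnj \<alpha> * of_real ((cmod z)^2) = 2 + cnj \<beta> * z^2"
      by (simp only: r1 r2)
    finally show ?thesis by simp
  qed
  have "(Im f = 0 \<and> Im g = 0) \<longleftrightarrow> cnj (f + \<i> * g) = f - \<i> * g"
    by (auto simp: complex_eq_iff)
  then show ?thesis unfolding eqv A B f_def[symmetric] g_def[symmetric] by auto
qed



lemma cmod_sq_parts: "(cmod w)^2 = (Re w)^2 + (Im w)^2"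
  by (simp add: cmod_def)

lemma alg2:
  fixes \<alpha> \<beta> :: complex assumes ne: "cmod \<alpha> \<noteq> cmod \<beta>"
  shows "(\<exists>z. z \<noteq> 0 \<and> cnj \<alpha> * of_real ((cmod z)^2) = 2 + cnj \<beta> * z^2) \<longleftrightarrow> (\<alpha>, \<beta>) \<notin> Omega"
proof -
  define a where "a = Re \<alpha>"
  define b where "b = Im \<alpha>"
  define n where "n = cmod \<beta>"
  have n0: "n \<ge> 0" by (simp add: n_def)
  have ma: "(cmod \<alpha>)^2 = a^2 + b^2" by (simp add: a_def b_def cmod_sq_parts)
  have notO: "(\<alpha>, \<beta>) \<notin> Omega \<longleftrightarrow> cmod \<alpha> \<le> n \<or> (a \<ge> 0 \<and> \<bar>b\<bar> \<le> n)"
    by (auto simp: Omega_def a_def b_def n_def)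
  have sq: "(cmod (cnj \<alpha> * of_real t - 2))^2 = (a*t - 2)^2 + (b*t)^2" for t
    by (simp add: cmod_sq_parts a_def b_def)
  show ?thesis
  proof
    assume "\<exists>z. z \<noteq> 0 \<and> cnj \<alpha> * of_real ((cmod z)^2) = 2 + cnj \<beta> * z^2"
    then obtain z where z: "z \<noteq> 0" and E: "cnj \<alpha> * of_real ((cmod z)^2) = 2 + cnj \<beta> * z^2" by blast
    define t where "t = (cmod z)^2"
    have t0: "t > 0" using z by (simp add: t_def)
    have "cnj \<alpha> * of_real t - 2 = cnj \<beta> * z^2" using E by (simp add: t_def)
    then have "cmod (cnj \<alpha> * of_real t - 2) = n * t"
      by (simp add: n_def t_def norm_mult norm_power)
    then have Q: "(a*t - 2)^2 + (b*t)^2 = (n*t)^2" using sq[of t] by simp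
    show "(\<alpha>, \<beta>) \<notin> Omega"
    proof (rule ccontr)
      assume "\<not> (\<alpha>, \<beta>) \<notin> Omega"
      then have H: "cmod \<alpha> > n" "a < 0 \<or> \<bar>b\<bar> > n" using notO by auto
      have "(cmod \<alpha>)^2 > n^2" using H(1) n0 by (simp add: power_strict_mono)
      then have ab: "a^2 + b^2 > n^2" using ma by simp
      have p: "(a*t)^2 = a^2*t^2" "(b*t)^2 = b^2*t^2" "(n*t)^2 = n^2*t^2"
        "(a^2+b^2)*t^2 = a^2*t^2 + b^2*t^2" by (simp_all add: power_mult_distrib distrib_right)
      from H(2) show False
      proof
        assume "a < 0"
        then have "a*t < 0" using t0 by (simp add: mult_neg_pos)
        moreover have "(a*t - 2)^2 = (a*t)^2 - 4*(a*t) + 4" by (simp add: power2_eq_square algebra_simps)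
        ultimately have "(a*t - 2)^2 > (a*t)^2" by linarith
        moreover have "(a^2 + b^2) * t^2 > n^2 * t^2" using ab t0 by simp
        ultimately show False using Q p by linarith
      next
        assume "\<bar>b\<bar> > n"
        then have "n^2 < \<bar>b\<bar>^2" using n0 by (intro power_strict_mono) auto
        then have "b^2 > n^2" by simp
        then have "b^2 * t^2 > n^2 * t^2" using t0 by simp
        moreover have "(a*t - 2)^2 \<ge> 0" by simp
        ultimately show False using Q p by linarith
      qed
    qed
  next
    assume "(\<alpha>, \<beta>) \<notin> Omega"
    then have H: "cmod \<alpha> \<le> n \<or> (a \<ge> 0 \<and> \<bar>b\<bar> \<le> n)" using notO by simp
    have ne2: "a^2 + b^2 \<noteq> n^2"
    proof
      assume "a^2 + b^2 = n^2"
      then have "(cmod \<alpha>)^2 = n^2" using ma by simp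
      then have "cmod \<alpha> = n" using n0 by (simp add: power2_eq_iff_nonneg)
      with ne show False by (simp add: n_def)
    qed
    have nb: "n^2 - b^2 \<ge> 0"
    proof (cases "cmod \<alpha> \<le> n")
      case True
      then have "(cmod \<alpha>)^2 \<le> n^2" by (simp add: power_mono)
      moreover have "a^2 \<ge> 0" by simp
      ultimately show ?thesis using ma by linarith
    next
      case False
      with H have "\<bar>b\<bar> \<le> n" by simp
      then have "\<bar>b\<bar>^2 \<le> n^2" by (intro power_mono) auto
      then have "b^2 \<le> n^2" by simp
      then show ?thesis by simp
    qed
    define s where "s = sqrt (n^2 - b^2)"
    have s0: "s \<ge> 0" and s2: "s^2 = n^2 - b^2" using nb by (simp_all add: s_def)
    define u where "u = (a + s) / 2"
    have u0: "u > 0"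
    proof (cases "cmod \<alpha> \<le> n")
      case True
      then have "(cmod \<alpha>)^2 \<le> n^2" by (simp add: power_mono)
      with ma ne2 have "a^2 < s^2" using s2 by simp
      then have "\<bar>a\<bar>^2 < s^2" by simp
      then have "\<bar>a\<bar> < s" using s0 by (rule power2_less_imp_less)
      then show ?thesis by (simp add: u_def)
    next
      case False
      with H have a0: "a \<ge> 0" by simp
      have "a + s \<noteq> 0"
      proof
        assume "a + s = 0"
        with a0 s0 have "a = 0" "s = 0" by auto
        with s2 have "b^2 = n^2" by simp
        with \<open>a = 0\<close> ne2 show False by simp
      qed
      then show ?thesis using a0 s0 by (simp add: u_def)
    qed
    define t where "t = 1 / u"
    have t0: "t > 0" using u0 by (simp add: t_def)
    have "a - 2*u = -s" unfolding u_def by (simp add: field_simps)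
    then have "(a - 2*u)^2 + b^2 = n^2" using s2 by simp
    then have "((a - 2*u)^2 + b^2) * t^2 = n^2 * t^2" by simp
    moreover have "(a - 2*u) * t = a*t - 2" using u0 by (simp add: t_def field_simps)
    ultimately have Q: "(a*t - 2)^2 + (b*t)^2 = (n*t)^2"
      by (simp only: distrib_right power_mult_distrib[symmetric])
    define w where "w = cnj \<alpha> * of_real t - 2"
    have mw: "cmod w = n * t"
    proof -
      have "(cmod w)^2 = (n*t)^2" using Q sq[of t] by (simp add: w_def)
      then show ?thesis using n0 t0 by (simp add: power2_eq_iff_nonneg)
    qed
    show "\<exists>z. z \<noteq> 0 \<and> cnj \<alpha> * of_real ((cmod z)^2) = 2 + cnj \<beta> * z^2"
    proof (cases "\<beta> = 0")
      case True
      then have "w = 0" using mw by (simp add: n_def)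
      define z where "z = complex_of_real (sqrt t)"
      have "(cmod z)^2 = t" using t0 by (simp add: z_def)
      moreover have "z \<noteq> 0" using t0 by (simp add: z_def)
      ultimately show ?thesis using \<open>w = 0\<close> True by (auto simp: w_def)
    next
      case False
      define z where "z = csqrt (w / cnj \<beta>)"
      have z2: "z^2 = w / cnj \<beta>" by (simp add: z_def)
      have "(cmod z)^2 = cmod (z^2)" by (simp add: norm_power)
      also have "\<dots> = t" using False mw n0 by (simp add: z2 norm_divide n_def)
      finally have mz: "(cmod z)^2 = t" .
      then have "z \<noteq> 0" using t0 by auto
      moreover have "cnj \<beta> * z^2 = w" using False by (simp add: z2)
      ultimately show ?thesis using mz by (auto simp: w_def)
    qed
  qed
qed


lemma Phi_deriv:
  fixes z :: complex assumes z: "z \<noteq> 0"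
  shows "((\<lambda>z. Phi \<alpha> \<beta> r1 r2 z $ k) has_field_derivative
          (vector [-2/z^3 - of_real r1/z^2, -2*\<i>/z^3 - of_real r2/z^2, -1/z^2] :: complex^3) $ k) (at z)"
proof -
  have "k = 1 \<or> k = 2 \<or> k = 3" using exhaust_3 by blast
  then show ?thesis
  proof (elim disjE)
    assume k: "k = 1"
    show ?thesis unfolding k Phi_def vector_3
      using z by (auto intro!: derivative_eq_intros simp: power2_eq_square power3_eq_cube field_simps)
  next
    assume k: "k = 2"
    show ?thesis unfolding k Phi_def vector_3
      using z by (auto intro!: derivative_eq_intros simp: power2_eq_square power3_eq_cube field_simps)
  next
    assume k: "k = 3"
    show ?thesis unfolding k Phi_def vector_3
      using z by (auto intro!: derivative_eq_intros simp: power2_eq_square power3_eq_cube field_simps)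
  qed
qed

lemma Phi_deriv_cont:
  "continuous_on (- {0}) (\<lambda>z. (vector [-2/z^3 - of_real r1/z^2, -2*\<i>/z^3 - of_real r2/z^2, -1/z^2] :: complex^3) $ k)"
proof -
  have "k = 1 \<or> k = 2 \<or> k = 3" using exhaust_3 by blast
  then show ?thesis
    by (elim disjE) (auto intro!: continuous_intros)
qed

theorem lemma5p3:
  fixes \<alpha> \<beta> :: complex and r1 r2 :: real
  assumes "cmod \<alpha> \<noteq> cmod \<beta>"
  shows "(\<exists>X. is_Re_primitive X (Phi \<alpha> \<beta> r1 r2) (- {0})) \<and>
         (\<forall>X. is_Re_primitive X (Phi \<alpha> \<beta> r1 r2) (- {0}) \<longrightarrow>
              harmonic_on X (- {0}) \<and>
              (immersion_on X (- {0}) \<longleftrightarrow> (\<alpha>, \<beta>) \<in> Omega))"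
proof (intro conjI allI impI)
  show "\<exists>X. is_Re_primitive X (Phi \<alpha> \<beta> r1 r2) (- {0})"
    using exists_prim by blast
next
  fix X assume P: "is_Re_primitive X (Phi \<alpha> \<beta> r1 r2) (- {0})"
  show "harmonic_on X (- {0})"
    by (rule harmonic_gen[OF _ P Phi_deriv Phi_deriv_cont]) auto
next
  fix X assume P: "is_Re_primitive X (Phi \<alpha> \<beta> r1 r2) (- {0})"
  have "immersion_on X (- {0}) \<longleftrightarrow> (\<forall>z\<in>- {0}. inj (\<lambda>h. (\<chi> k. Re (Phi \<alpha> \<beta> r1 r2 z $ k * h)) :: real^3))"
    unfolding immersion_on_def
  proof (intro ball_cong refl)
    fix z :: complex assume "z \<in> - {0}"
    with P have d: "(X has_derivative (\<lambda>h. \<chi> k. Re (Phi \<alpha> \<beta> r1 r2 z $ k * h))) (at z)"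
      unfolding is_Re_primitive_def by blast
    show "(X differentiable at z \<and> inj (frechet_derivative X (at z))) \<longleftrightarrow> inj (\<lambda>h. (\<chi> k. Re (Phi \<alpha> \<beta> r1 r2 z $ k * h)) :: real^3)"
      using differentiableI[OF d] frechet_derivative_at[OF d] by simp
  qed
  also have "\<dots> \<longleftrightarrow> \<not> (\<exists>z. z \<noteq> 0 \<and> cnj \<alpha> * of_real ((cmod z)^2) = 2 + cnj \<beta> * z^2)"
  proof -
    have "inj (\<lambda>h. (\<chi> k. Re (Phi \<alpha> \<beta> r1 r2 z $ k * h)) :: real^3) \<longleftrightarrow>
          \<not> (cnj \<alpha> * of_real ((cmod z)^2) = 2 + cnj \<beta> * z^2)" if z: "z \<noteq> 0" for z
      by (simp only: inj_char[OF z] alg1[OF z])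
    then show ?thesis by auto
  qed
  also have "\<dots> \<longleftrightarrow> (\<alpha>, \<beta>) \<in> Omega"
    using alg2[OF assms] by simp
  finally show "immersion_on X (- {0}) \<longleftrightarrow> (\<alpha>, \<beta>) \<in> Omega" .
qed

end
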